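(* Let $A \in \mathbb{R}^{m \times r}$ and $C = \{ x \in \mathbb{R}^r \mid Ax \ge 0\}$. Then $C$ has only finitely many conformally non-decomposable vectors up to positive scalar multiples.
   Context: For $x \in \mathbb{R}^n$, $\operatorname{sign}(x) \in \{-,0,+\}^n$ is obtained by applying the sign function componentwise; the relations $0<-$, $0<+$ induce a componentwise partial order on $\{-,0,+\}^n$. A nonzero $x \in C$ is conformally non-decomposable if for all nonzero $x^1,x^2 \in C$ with $\operatorname{sign}(x^1),\operatorname{sign}(x^2) \le \operatorname{sign}(x)$, $x = x^1 + x^2$ implies $x^1 = \lambda x^2$ for some $\lambda > 0$. *)

theory Defs
  imports "HOL-Analysis.Analysis"
begin

text \<open>The partial order on sign values has 0 below - and +, and - and + incomparable;
  componentwise: sign(x) \<le> sign(y) iff each component of sign(x) is 0 or equals that of sign(y).\<close>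
definition sign_le :: "real ^ 'n \<Rightarrow> real ^ 'n \<Rightarrow> bool" where
  "sign_le x y \<longleftrightarrow> (\<forall>i. sgn (x $ i) = 0 \<or> sgn (x $ i) = sgn (y $ i))"

definition conf_nondecomp :: "(real ^ 'n) set \<Rightarrow> real ^ 'n \<Rightarrow> bool" where
  "conf_nondecomp C x \<longleftrightarrow> x \<in> C \<and> x \<noteq> 0 \<and>
     (\<forall>x1 x2. x1 \<in> C \<and> x2 \<in> C \<and> x1 \<noteq> 0 \<and> x2 \<noteq> 0 \<and>
        sign_le x1 x \<and> sign_le x2 x \<and> x = x1 + x2 \<longrightarrow> (\<exists>l>0. x1 = l *\<^sub>R x2))"

end

theory Submission
  imports Defs
begin

lemma ev_comp:
  fixes a b :: real
  assumes "a > 0 \<longleftrightarrow> b > 0" "a < 0 \<longleftrightarrow> b < 0"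
  shows "\<forall>\<^sub>F t in at_right 0. sgn (a - t * b) = sgn a"
proof -
  have lim: "((\<lambda>t. a - t * b) \<longlongrightarrow> a - 0 * b) (at_right (0::real))"
    by (intro tendsto_intros)
  consider "a > 0" | "a < 0" | "a = 0" by linarith
  then show ?thesis
  proof cases
    case 1
    have "\<forall>\<^sub>F t in at_right 0. a - t * b > 0"
      using order_tendstoD(1)[OF lim, of 0] 1 by simp
    then show ?thesis by eventually_elim (use 1 in simp)
  next
    case 2
    have "\<forall>\<^sub>F t in at_right 0. a - t * b < 0"
      using order_tendstoD(2)[OF lim, of 0] 2 by simp
    then show ?thesis by eventually_elim (use 2 in simp)
  next
    case 3
    then have "b = 0" using assms by linarith
    then show ?thesis using 3 by simp
  qed
qed

lemma ev_pos:
  fixes a b :: real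
  assumes "a = 0 \<longleftrightarrow> b = 0" "a \<ge> 0"
  shows "\<forall>\<^sub>F t in at_right 0. a - t * b \<ge> 0"
proof (cases "a = 0")
  case True then show ?thesis using assms by simp
next
  case False
  have lim: "((\<lambda>t. a - t * b) \<longlongrightarrow> a - 0 * b) (at_right (0::real))"
    by (intro tendsto_intros)
  have "\<forall>\<^sub>F t in at_right 0. a - t * b > 0"
    using order_tendstoD(1)[OF lim, of 0] False assms by simp
  then show ?thesis by eventually_elim simp
qed

lemma key_lemma:
  fixes A :: "real ^ 'r ^ 'm"
  assumes Cdef: "C = {x :: real ^ 'r. \<forall>i. (A *v x) $ i \<ge> 0}"
    and nd: "conf_nondecomp C x" and x'C: "x' \<in> C" and x'0: "x' \<noteq> 0"
    and sg: "\<forall>j. (x$j > 0 \<longleftrightarrow> x'$j > 0) \<and> (x$j < 0 \<longleftrightarrow> x'$j < 0)"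
    and zs: "\<forall>i. ((A *v x)$i = 0 \<longleftrightarrow> (A *v x')$i = 0)"
  shows "\<exists>l>0. x = l *\<^sub>R x'"
proof -
  have xC: "x \<in> C" using nd unfolding conf_nondecomp_def by blast
  have e1: "\<forall>\<^sub>F t in at_right 0. \<forall>j. sgn (x$j - t * x'$j) = sgn (x$j)"
    by (rule eventually_all_finite) (use sg in \<open>auto intro: ev_comp\<close>)
  have e2: "\<forall>\<^sub>F t in at_right 0. \<forall>i. (A *v x)$i - t * (A *v x')$i \<ge> 0"
  proof (rule eventually_all_finite)
    fix i
    show "\<forall>\<^sub>F t in at_right 0. (A *v x)$i - t * (A *v x')$i \<ge> 0"
      by (rule ev_pos) (use zs xC Cdef in auto)
  qed
  have "\<forall>\<^sub>F t in at_right 0. t > 0 \<and> (\<forall>j. sgn (x$j - t * x'$j) = sgn (x$j)) \<and>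
      (\<forall>i. (A *v x)$i - t * (A *v x')$i \<ge> 0)"
    using e1 e2 eventually_at_right_less[of 0] by eventually_elim blast
  then obtain t where t: "t > 0" "\<forall>j. sgn (x$j - t * x'$j) = sgn (x$j)"
    "\<forall>i. (A *v x)$i - t * (A *v x')$i \<ge> 0"
    using eventually_happens' by (metis (mono_tags, lifting) trivial_limit_at_right_real)
  define y where "y = x - t *\<^sub>R x'"
  have yC: "y \<in> C" using t(3) unfolding Cdef y_def
    by (simp add: matrix_vector_mult_diff_distrib matrix_vector_mult_scaleR)
  have txC: "t *\<^sub>R x' \<in> C" using x'C t(1) unfolding Cdef
    by (simp add: matrix_vector_mult_scaleR)
  have tx0: "t *\<^sub>R x' \<noteq> 0" using t(1) x'0 by simp
  have sy: "sign_le y x" using t(2) unfolding sign_le_def y_def by simp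
  have stx: "sign_le (t *\<^sub>R x') x" unfolding sign_le_def
  proof
    fix j
    have "sgn (x'$j) = sgn (x$j)" using sg[rule_format, of j] by (auto simp: sgn_real_def)
    then show "sgn ((t *\<^sub>R x')$j) = 0 \<or> sgn ((t *\<^sub>R x')$j) = sgn (x$j)"
      using t(1) by (simp add: sgn_mult)
  qed
  have xs: "x = y + t *\<^sub>R x'" unfolding y_def by simp
  show ?thesis
  proof (cases "y = 0")
    case True then show ?thesis using xs t(1) by auto
  next
    case False
    then obtain l where l: "l > 0" "y = l *\<^sub>R (t *\<^sub>R x')"
      using nd yC txC tx0 sy stx xs unfolding conf_nondecomp_def by blast
    have "x = (l * t + t) *\<^sub>R x'" using xs l by (simp add: algebra_simps)
    moreover have "l * t + t > 0" using l(1) t(1) by (simp add: add_pos_pos)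
    ultimately show ?thesis by blast
  qed
qed

theorem proposition3:
  fixes A :: "real ^ 'r ^ 'm"
  defines "C \<equiv> {x :: real ^ 'r. \<forall>i. (A *v x) $ i \<ge> 0}"
  shows "\<exists>F. finite F \<and> (\<forall>x. conf_nondecomp C x \<longrightarrow> (\<exists>f\<in>F. \<exists>l>0. x = l *\<^sub>R f))"
proof -
  define key where "key = (\<lambda>x::real^'r. ({j. x$j > 0}, {j. x$j < 0}, {i. (A *v x)$i = 0}))"
  define S where "S = {x. conf_nondecomp C x}"
  define rep where "rep = (\<lambda>k. SOME x. x \<in> S \<and> key x = k)"
  have fin: "finite (key ` S)" by (rule finite_subset[of _ UNIV]) auto
  show ?thesis
  proof (intro exI conjI allI impI)
    show "finite (rep ` key ` S)" using fin by simp
  next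
    fix x assume nd: "conf_nondecomp C x"
    then have xS: "x \<in> S" unfolding S_def by simp
    define f where "f = rep (key x)"
    have fS: "f \<in> S \<and> key f = key x" unfolding f_def rep_def
      by (rule someI[of _ x]) (use xS in simp)
    then have fnd: "conf_nondecomp C f" unfolding S_def by simp
    have "\<exists>l>0. x = l *\<^sub>R f"
    proof (rule key_lemma[OF meta_eq_to_obj_eq[OF C_def] nd])
      show "f \<in> C" "f \<noteq> 0" using fnd unfolding conf_nondecomp_def by auto
      have k: "{j. x$j > 0} = {j. f$j > 0}" "{j. x$j < 0} = {j. f$j < 0}"
        "{i. (A *v x)$i = 0} = {i. (A *v f)$i = 0}" using fS unfolding key_def by auto
      show "\<forall>j. (x$j > 0 \<longleftrightarrow> f$j > 0) \<and> (x$j < 0 \<longleftrightarrow> f$j < 0)"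
        using k(1,2) by (auto simp: set_eq_iff)
      show "\<forall>i. ((A *v x)$i = 0 \<longleftrightarrow> (A *v f)$i = 0)"
        using k(3) by (auto simp: set_eq_iff)
    qed
    moreover have "f \<in> rep ` key ` S" unfolding f_def using xS by blast
    ultimately show "\<exists>f\<in>rep ` key ` S. \<exists>l>0. x = l *\<^sub>R f" by blast
  qed
qed

end
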